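(* Let $u_1,\dots,u_m\in\mathbb{R}^d$ and let $F_i(x)=\frac12\|x-u_i\|^2$, so $F(x)=\frac1m\sum_{i=1}^m F_i(x)$ has unique minimizer $x^\star=\frac1m\sum_i u_i$. Run FedAvg (as described in the context) with exact local gradients, initial point $x^0=0$, constant learning rate $\eta\in(0,1)$, $s\ge1$ local steps, and time-invariant link probabilities $p_i^t=p_i\in(0,1]$ for all $t$. Then $$\lim_{T\to\infty}\mathbb{E}[x^T]=\sum_{i=1}^m\frac{p_i u_i\left[1+\sum_{j=2}^m(-1)^{j+1}\frac1j\sum_{S\in\mathcal{B}^i_j}\prod_{z\in S}p_z\right]}{1-\prod_{l=1}^m(1-p_l)},$$ where $\mathcal{B}^i_j=\{S\subseteq[m]\setminus\{i\}:\ |S|=j-1\}$.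
   Context: FedAvg with unreliable uplinks: there are $m$ clients and a server holding $x^t$. In each round $t$, client $i$'s uplink is active with probability $p_i^t$, independently across clients and rounds; $\mathcal{A}^t$ is the set of clients with active uplinks. Each client starts from the current server model $x^t$ and performs $s$ steps of gradient descent with exact gradients, $y_{k+1}=y_k-\eta\nabla F_i(y_k)$, $y_0=x^t$, obtaining $y_s^{(i)}$. If $\mathcal{A}^t\neq\emptyset$ the server sets $x^{t+1}=\frac{1}{|\mathcal{A}^t|}\sum_{i\in\mathcal{A}^t}y_s^{(i)}$; otherwise $x^{t+1}=x^t$. *)

theory Defs
  imports "HOL-Probability.Probability"
begin

text \<open>Clients are indexed by 1..m. Local update of client i: s steps of exact gradient
  descent with step size eta, started at the server model x; grad i is the gradient of F_i.\<close>
definition local_gd :: "real \<Rightarrow> nat \<Rightarrow> (nat \<Rightarrow> 'a::real_vector \<Rightarrow> 'a) \<Rightarrow> nat \<Rightarrow> 'a \<Rightarrow> 'a" where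
  "local_gd eta s grad i x = ((\<lambda>y. y - eta *\<^sub>R grad i y) ^^ s) x"

definition server_step :: "real \<Rightarrow> nat \<Rightarrow> (nat \<Rightarrow> 'a::real_vector \<Rightarrow> 'a) \<Rightarrow> 'a \<Rightarrow> nat set \<Rightarrow> 'a" where
  "server_step eta s grad x A =
     (if A = {} then x else (1 / real (card A)) *\<^sub>R (\<Sum>i\<in>A. local_gd eta s grad i x))"

definition active_pmf :: "nat \<Rightarrow> (nat \<Rightarrow> real) \<Rightarrow> nat set pmf" where
  "active_pmf m p = map_pmf (\<lambda>b. {i\<in>{1..m}. b i}) (Pi_pmf {1..m} False (\<lambda>i. bernoulli_pmf (p i)))"

primrec fedavg_pmf :: "nat \<Rightarrow> (nat \<Rightarrow> real) \<Rightarrow> real \<Rightarrow> nat \<Rightarrow> (nat \<Rightarrow> 'a::real_vector \<Rightarrow> 'a)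
    \<Rightarrow> 'a \<Rightarrow> nat \<Rightarrow> 'a pmf" where
  "fedavg_pmf m p eta s grad x0 0 = return_pmf x0"
| "fedavg_pmf m p eta s grad x0 (Suc t) =
     bind_pmf (fedavg_pmf m p eta s grad x0 t)
       (\<lambda>x. map_pmf (server_step eta s grad x) (active_pmf m p))"

end

theory Submission
  imports Defs
begin


lemma deriv_sq: "((\<lambda>x::real^'d. (1/2) * (norm (x - u))\<^sup>2) has_derivative (\<lambda>h. (y - u) \<bullet> h)) (at y)"
proof -
  have "((\<lambda>x::real^'d. (1/2) * ((x - u) \<bullet> (x - u))) has_derivative (\<lambda>h. (1/2) * (h \<bullet> (y - u) + (y - u) \<bullet> h))) (at y)"
    by (rule derivative_eq_intros refl)+ (auto simp: inner_commute)
  moreover have "(\<lambda>h. (1/2) * (h \<bullet> (y - u) + (y - u) \<bullet> h)) = (\<lambda>h. (y - u) \<bullet> h)"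
    by (auto simp: inner_commute)
  ultimately show ?thesis unfolding power2_norm_eq_inner by simp
qed

lemma grad_eq:
  assumes "((\<lambda>x::real^'d. (1/2) * (norm (x - u))\<^sup>2) has_derivative (\<lambda>h. g \<bullet> h)) (at y)"
  shows "g = y - u"
proof -
  have "(\<lambda>h. g \<bullet> h) = (\<lambda>h. (y - u) \<bullet> h)"
    using has_derivative_unique[OF assms deriv_sq] .
  then have "g \<bullet> (g - (y - u)) = (y - u) \<bullet> (g - (y - u))" by meson
  then have "(g - (y - u)) \<bullet> (g - (y - u)) = 0" by (simp add: inner_diff_left)
  then show ?thesis by simp
qed

lemma gd_iter:
  fixes u x :: "'a::real_vector"
  shows "((\<lambda>y. y - eta *\<^sub>R (y - u)) ^^ n) x = u + (1 - eta) ^ n *\<^sub>R (x - u)"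
proof (induction n)
  case (Suc n)
  have "((\<lambda>y. y - eta *\<^sub>R (y - u)) ^^ Suc n) x
     = (u + (1 - eta) ^ n *\<^sub>R (x - u)) - eta *\<^sub>R ((u + (1 - eta) ^ n *\<^sub>R (x - u)) - u)"
    using Suc.IH by simp
  also have "\<dots> = u + (1 - eta) ^ Suc n *\<^sub>R (x - u)" by (simp add: algebra_simps)
  finally show ?case .
qed simp



definition PP :: "(nat \<Rightarrow> real) \<Rightarrow> nat set \<Rightarrow> nat set \<Rightarrow> real" where
  "PP p I A = (\<Prod>x\<in>I. if x \<in> A then p x else 1 - p x)"

definition ww :: "nat \<Rightarrow> nat \<Rightarrow> real" where
  "ww k n = fact k * fact n / fact (k + n + 1)"

lemma aux_id:
  fixes a b F x y :: real
  assumes "F > 0" "x + y + 2 > 0"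
  shows "(y + 1) * a * b / ((x + y + 2) * F) = a * b / F - (x + 1) * a * b / ((x + y + 2) * F)"
proof -
  have "a * b / F = (x + y + 2) * a * b / ((x + y + 2) * F)" using assms by simp
  then have "a * b / F - (x + 1) * a * b / ((x + y + 2) * F) = ((x + y + 2) * a * b - (x + 1) * a * b) / ((x + y + 2) * F)"
    by (simp add: diff_divide_distrib)
  also have "(x + y + 2) * a * b - (x + 1) * a * b = (y + 1) * a * b" by (simp add: algebra_simps)
  finally show ?thesis by simp
qed

lemma ww_rec: "ww k (Suc n) = ww k n - ww (Suc k) n"
proof -
  define F where "F = (fact (k + n + 1) :: real)"
  have F0: "F > 0" unfolding F_def by simp
  have e1: "Suc k + n + 1 = Suc (k + n + 1)" "k + Suc n + 1 = Suc (k + n + 1)" by simp_all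
  have h0: "ww k n = fact k * fact n / F" unfolding ww_def F_def ..
  have h1: "ww (Suc k) n = (real k + 1) * fact k * fact n / ((real k + real n + 2) * F)"
    unfolding ww_def e1 fact_Suc[of "k + n + 1"] fact_Suc[of k] F_def[symmetric]
    by (simp del: fact_Suc add: algebra_simps)
  have h2: "ww k (Suc n) = (real n + 1) * fact k * fact n / ((real k + real n + 2) * F)"
    unfolding ww_def e1 fact_Suc[of "k + n + 1"] fact_Suc[of n] F_def[symmetric]
    by (simp del: fact_Suc add: algebra_simps)
  have p: "real k + real n + 2 > 0" by simp
  show ?thesis unfolding h0 h1 h2 using aux_id[OF F0 p] .
qed

lemma ww0: "ww 0 n = 1 / (real n + 1)"
proof -
  have "(0::real) < fact n + fact n * real n" by (intro add_pos_nonneg) auto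
  then show ?thesis unfolding ww_def by (simp add: field_simps)
qed

lemma sum_Pow_insert:
  assumes "finite J" "a \<notin> J"
  shows "(\<Sum>A\<in>Pow (insert a J). f A) = (\<Sum>A\<in>Pow J. f A) + (\<Sum>A\<in>Pow J. f (insert a A))"
proof -
  have inj: "inj_on (insert a) (Pow J)" using assms(2) by (intro inj_onI) (metis PowD in_mono insert_ident)
  have disj: "Pow J \<inter> insert a ` Pow J = {}" using assms(2) by blast
  have "(\<Sum>A\<in>Pow (insert a J). f A) = (\<Sum>A\<in>Pow J \<union> insert a ` Pow J. f A)"
    by (simp add: Pow_insert)
  also have "\<dots> = (\<Sum>A\<in>Pow J. f A) + (\<Sum>A\<in>insert a ` Pow J. f A)"
    using assms(1) disj by (intro sum.union_disjoint) auto
  also have "(\<Sum>A\<in>insert a ` Pow J. f A) = (\<Sum>A\<in>Pow J. f (insert a A))"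
    using sum.reindex[OF inj] by simp
  finally show ?thesis .
qed

lemma PP_insert1:
  assumes "finite J" "a \<notin> J" "A \<subseteq> J"
  shows "PP p (insert a J) A = (1 - p a) * PP p J A"
  using assms unfolding PP_def by (subst prod.insert) auto

lemma PP_insert2:
  assumes "finite J" "a \<notin> J" "A \<subseteq> J"
  shows "PP p (insert a J) (insert a A) = p a * PP p J A"
proof -
  have "PP p (insert a J) (insert a A) = p a * (\<Prod>x\<in>J. if x \<in> insert a A then p x else 1 - p x)"
    using assms unfolding PP_def by (subst prod.insert) auto
  also have "(\<Prod>x\<in>J. if x \<in> insert a A then p x else 1 - p x) = PP p J A"
    unfolding PP_def using assms by (intro prod.cong) auto
  finally show ?thesis .
qed

lemma C2:
  assumes "finite J"
  shows "(\<Sum>A\<in>Pow J. PP p J A / (real (card A) + real k + 1))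
       = (\<Sum>S\<in>Pow J. (-1) ^ card S * prod p S * ww k (card S))"
  using assms
proof (induction J arbitrary: k rule: finite_induct)
  case empty
  then show ?case by (simp add: PP_def ww_def)
next
  case (insert a J)
  define R where "R k = (\<Sum>S\<in>Pow J. (-1) ^ card S * prod p S * ww k (card S))" for k
  have fin: "\<And>A. A \<in> Pow J \<Longrightarrow> finite A" using insert(1) finite_subset by auto
  have "(\<Sum>A\<in>Pow (insert a J). PP p (insert a J) A / (real (card A) + real k + 1))
      = (\<Sum>A\<in>Pow J. (1 - p a) * (PP p J A / (real (card A) + real k + 1)))
        + (\<Sum>A\<in>Pow J. p a * (PP p J A / (real (card A) + real (Suc k) + 1)))"
    unfolding sum_Pow_insert[OF insert(1,2)]
  proof (intro arg_cong2[where f="(+)"] sum.cong refl)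
    fix A assume "A \<in> Pow J"
    then show "PP p (insert a J) A / (real (card A) + real k + 1) = (1 - p a) * (PP p J A / (real (card A) + real k + 1))"
      using PP_insert1[OF insert(1,2)] by auto
  next
    fix A assume A: "A \<in> Pow J"
    then have "a \<notin> A" using insert(2) by auto
    then have "card (insert a A) = Suc (card A)" using fin[OF A] by simp
    then show "PP p (insert a J) (insert a A) / (real (card (insert a A)) + real k + 1) = p a * (PP p J A / (real (card A) + real (Suc k) + 1))"
      using PP_insert2[OF insert(1,2)] A by auto
  qed
  also have "\<dots> = (1 - p a) * R k + p a * R (Suc k)"
    unfolding R_def insert.IH[symmetric] sum_distrib_left[symmetric] by simp
  also have "\<dots> = R k - p a * (R k - R (Suc k))" by (simp add: algebra_simps)
  also have "R k - R (Suc k) = (\<Sum>S\<in>Pow J. (-1) ^ card S * prod p S * ww k (Suc (card S)))"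
    unfolding R_def sum_subtractf[symmetric] by (intro sum.cong refl) (simp add: ww_rec algebra_simps)
  also have "R k - p a * \<dots> = (\<Sum>S\<in>Pow (insert a J). (-1) ^ card S * prod p S * ww k (card S))"
    unfolding sum_Pow_insert[OF insert(1,2)] R_def
  proof -
    have "(\<Sum>A\<in>Pow J. (- 1) ^ card (insert a A) * prod p (insert a A) * ww k (card (insert a A)))
       = - (p a * (\<Sum>S\<in>Pow J. (- 1) ^ card S * prod p S * ww k (Suc (card S))))"
      unfolding sum_distrib_left sum_negf[symmetric]
    proof (intro sum.cong refl)
      fix A assume A: "A \<in> Pow J"
      then have "a \<notin> A" using insert(2) by auto
      then show "(- 1) ^ card (insert a A) * prod p (insert a A) * ww k (card (insert a A)) =
         - (p a * ((- 1) ^ card A * prod p A * ww k (Suc (card A))))"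
        using fin[OF A] by simp
    qed
    then show "(\<Sum>S\<in>Pow J. (- 1) ^ card S * prod p S * ww k (card S)) -
      p a * (\<Sum>S\<in>Pow J. (- 1) ^ card S * prod p S * ww k (Suc (card S))) =
      (\<Sum>A\<in>Pow J. (- 1) ^ card A * prod p A * ww k (card A)) +
      (\<Sum>A\<in>Pow J. (- 1) ^ card (insert a A) * prod p (insert a A) * ww k (card (insert a A)))"
      by simp
  qed
  finally show ?case .
qed

lemma C1:
  assumes "finite I" "i \<in> I"
  shows "(\<Sum>A\<in>Pow I. PP p I A * (if i \<in> A then 1 / real (card A) else 0))
       = p i * (\<Sum>S\<in>Pow (I - {i}). (-1) ^ card S * prod p S * ww 0 (card S))"
proof -
  define J where "J = I - {i}"
  have I: "I = insert i J" "finite J" "i \<notin> J" using assms unfolding J_def by auto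
  have fin: "\<And>A. A \<in> Pow J \<Longrightarrow> finite A" using I finite_subset by auto
  have "(\<Sum>A\<in>Pow I. PP p I A * (if i \<in> A then 1 / real (card A) else 0))
      = (\<Sum>A\<in>Pow J. p i * (PP p J A / (real (card A) + real 0 + 1)))"
    unfolding I(1) sum_Pow_insert[OF I(2,3)]
  proof -
    have "(\<Sum>A\<in>Pow J. PP p (insert i J) A * (if i \<in> A then 1 / real (card A) else 0)) = 0"
      using I(3) by (intro sum.neutral) auto
    moreover have "(\<Sum>A\<in>Pow J. PP p (insert i J) (insert i A) * (if i \<in> insert i A then 1 / real (card (insert i A)) else 0))
       = (\<Sum>A\<in>Pow J. p i * (PP p J A / (real (card A) + real 0 + 1)))"
    proof (intro sum.cong refl)
      fix A assume A: "A \<in> Pow J"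
      then have "i \<notin> A" using I(3) by auto
      then show "PP p (insert i J) (insert i A) * (if i \<in> insert i A then 1 / real (card (insert i A)) else 0) =
         p i * (PP p J A / (real (card A) + real 0 + 1))"
        using fin[OF A] PP_insert2[OF I(2,3)] A by (simp add: add_ac)
    qed
    ultimately show "(\<Sum>A\<in>Pow J. PP p (insert i J) A * (if i \<in> A then 1 / real (card A) else 0)) +
    (\<Sum>A\<in>Pow J. PP p (insert i J) (insert i A) * (if i \<in> insert i A then 1 / real (card (insert i A)) else 0)) =
    (\<Sum>A\<in>Pow J. p i * (PP p J A / (real (card A) + real 0 + 1)))" by simp
  qed
  also have "\<dots> = p i * (\<Sum>S\<in>Pow J. (-1) ^ card S * prod p S * ww 0 (card S))"
    unfolding sum_distrib_left[symmetric] C2[OF I(2)] ..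
  finally show ?thesis unfolding J_def .
qed

lemma C3:
  assumes "finite J" "card J + 1 = m"
  shows "(\<Sum>S\<in>Pow J. (-1) ^ card S * prod p S * ww 0 (card S))
       = 1 + (\<Sum>j\<in>{2..m}. (-1) ^ (j + 1) * (1 / real j) * (\<Sum>S\<in>{S. S \<subseteq> J \<and> card S = j - 1}. prod p S))"
proof -
  let ?h = "\<lambda>S. (-1) ^ card S * prod p S * ww 0 (card S)"
  have sub: "(\<lambda>S. card S + 1) ` Pow J \<subseteq> {1..m}"
    using assms card_mono by fastforce
  have "(\<Sum>S\<in>Pow J. ?h S) = (\<Sum>j\<in>{1..m}. \<Sum>S\<in>{S. S \<in> Pow J \<and> card S + 1 = j}. ?h S)"
    using sum.group[OF _ _ sub, of ?h] assms(1) by simp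
  also have "\<dots> = (\<Sum>j\<in>{1..m}. (-1) ^ (j + 1) * (1 / real j) * (\<Sum>S\<in>{S. S \<subseteq> J \<and> card S = j - 1}. prod p S))"
  proof (intro sum.cong refl)
    fix j assume j: "j \<in> {1..m}"
    have e: "{S. S \<in> Pow J \<and> card S + 1 = j} = {S. S \<subseteq> J \<and> card S = j - 1}" using j by auto
    have "(\<Sum>S\<in>{S. S \<subseteq> J \<and> card S = j - 1}. ?h S) = (\<Sum>S\<in>{S. S \<subseteq> J \<and> card S = j - 1}. (-1) ^ (j + 1) * (1 / real j) * prod p S)"
    proof (intro sum.cong refl)
      fix S assume S: "S \<in> {S. S \<subseteq> J \<and> card S = j - 1}"
      then have c: "card S = j - 1" by auto
      obtain k where "j = Suc k" using j by (cases j) auto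
      then have "(-1::real) ^ (j - 1) = (-1) ^ (j + 1)" by simp
      moreover have "real (j - 1) + 1 = real j" using j by auto
      ultimately show "?h S = (-1) ^ (j + 1) * (1 / real j) * prod p S" unfolding c ww0 by simp
    qed
    then show "(\<Sum>S\<in>{S. S \<in> Pow J \<and> card S + 1 = j}. ?h S) = (-1) ^ (j + 1) * (1 / real j) * (\<Sum>S\<in>{S. S \<subseteq> J \<and> card S = j - 1}. prod p S)"
      unfolding e sum_distrib_left by simp
  qed
  also have "\<dots> = 1 + (\<Sum>j\<in>{2..m}. (-1) ^ (j + 1) * (1 / real j) * (\<Sum>S\<in>{S. S \<subseteq> J \<and> card S = j - 1}. prod p S))"
  proof -
    have m: "m \<ge> 1" using assms by auto
    have "{1..m} = insert 1 {2..m}" using m by auto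
    moreover have "{S. S \<subseteq> J \<and> card S = 1 - 1} = {{}}" using assms(1) finite_subset by fastforce
    ultimately show ?thesis by simp
  qed
  finally show ?thesis .
qed



lemma E_active:
  fixes f :: "nat set \<Rightarrow> 'b::{banach, second_countable_topology}"
  assumes p: "\<And>i. i \<in> {1..m} \<Longrightarrow> 0 \<le> p i \<and> p i \<le> 1"
  shows "measure_pmf.expectation (active_pmf m p) f = (\<Sum>A\<in>Pow {1..m}. PP p {1..m} A *\<^sub>R f A)"
proof -
  define I where "I = {1..m::nat}"
  define g where "g = (\<lambda>b. {i\<in>I. b i})"
  define M where "M = Pi_pmf I False (\<lambda>i. bernoulli_pmf (p i))"
  define D where "D = PiE_dflt I False (\<lambda>_. UNIV :: bool set)"
  have finI: "finite I" unfolding I_def by simp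
  have finD: "finite D" unfolding D_def using finI by (intro finite_PiE_dflt) auto
  have setM: "set_pmf M \<subseteq> D"
    using set_Pi_pmf_subset[OF finI, of False] unfolding M_def D_def PiE_dflt_def by auto
  have "measure_pmf.expectation (active_pmf m p) f = measure_pmf.expectation M (\<lambda>b. f (g b))"
    unfolding active_pmf_def M_def g_def I_def integral_map_pmf ..
  also have "\<dots> = (\<Sum>b\<in>D. pmf M b *\<^sub>R f (g b))"
    using setM by (intro integral_measure_pmf[OF finD]) auto
  also have "\<dots> = (\<Sum>b\<in>D. PP p I (g b) *\<^sub>R f (g b))"
  proof (intro sum.cong refl)
    fix b assume b: "b \<in> D"
    have "pmf M b = (\<Prod>x\<in>I. pmf (bernoulli_pmf (p x)) (b x))"
      using b unfolding M_def pmf_Pi[OF finI] D_def PiE_dflt_def by auto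
    also have "\<dots> = PP p I (g b)"
      unfolding PP_def g_def
    proof (intro prod.cong refl)
      fix x assume x: "x \<in> I"
      then have "0 \<le> p x" "p x \<le> 1" using p unfolding I_def by auto
      then show "pmf (bernoulli_pmf (p x)) (b x) = (if x \<in> {i \<in> I. b i} then p x else 1 - p x)"
        using x by (cases "b x") auto
    qed
    finally show "pmf M b *\<^sub>R f (g b) = PP p I (g b) *\<^sub>R f (g b)" by simp
  qed
  also have "\<dots> = (\<Sum>A\<in>Pow I. PP p I A *\<^sub>R f A)"
  proof -
    have "bij_betw g D (Pow I)"
      unfolding g_def D_def
      by (rule bij_betwI[of _ _ _ "\<lambda>B b. if b \<in> I then b \<in> B else False"]) (auto simp add: PiE_dflt_def)
    then show ?thesis by (rule sum.reindex_bij_betw)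
  qed
  finally show ?thesis unfolding I_def .
qed

lemma sum_PP:
  assumes p: "\<And>i. i \<in> {1..m} \<Longrightarrow> 0 \<le> p i \<and> p i \<le> 1"
  shows "(\<Sum>A\<in>Pow {1..m}. PP p {1..m} A) = 1"
  using E_active[OF p, where f="\<lambda>_. 1::real"] by simp

lemma set_active: "set_pmf (active_pmf m p) \<subseteq> Pow {1..m}"
  unfolding active_pmf_def by auto



theorem proposition1:
  fixes m s :: nat and u :: "nat \<Rightarrow> real ^ 'd" and p :: "nat \<Rightarrow> real" and eta :: real
    and grad :: "nat \<Rightarrow> real ^ 'd \<Rightarrow> real ^ 'd"
  assumes m1: "m \<ge> 1"
    and grad: "\<And>i y. i \<in> {1..m} \<Longrightarrow>
       ((\<lambda>x. (1/2) * (norm (x - u i))\<^sup>2) has_derivative (\<lambda>h. grad i y \<bullet> h)) (at y)"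
    and eta0: "0 < eta" and eta1: "eta < 1"
    and s1: "s \<ge> 1"
    and pp: "\<And>i. i \<in> {1..m} \<Longrightarrow> 0 < p i \<and> p i \<le> 1"
  shows "(\<lambda>T. measure_pmf.expectation (fedavg_pmf m p eta s grad 0 T) (\<lambda>x. x))
     \<longlonglongrightarrow> (\<Sum>i\<in>{1..m}.
           ((p i * (1 + (\<Sum>j\<in>{2..m}. (-1) ^ (j + 1) * (1 / real j) *
                (\<Sum>S\<in>{S. S \<subseteq> {1..m} - {i} \<and> card S = j - 1}. \<Prod>z\<in>S. p z))))
            / (1 - (\<Prod>l\<in>{1..m}. 1 - p l))) *\<^sub>R u i)"
proof -
  define I where "I = {1..m}"
  have finI: "finite I" unfolding I_def by simp
  have p01: "\<And>i. i \<in> {1..m} \<Longrightarrow> 0 \<le> p i \<and> p i \<le> 1" using pp by (meson less_imp_le)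
  define c where "c = (1 - eta) ^ s"
  have c0: "0 \<le> c" unfolding c_def using eta1 by simp
  have c1: "c < 1" unfolding c_def using eta0 eta1 s1 by (simp add: power_less_one_iff)
  define q where "q = (\<Prod>l\<in>I. 1 - p l)"
  have q0: "0 \<le> q" unfolding q_def using p01 I_def by (intro prod_nonneg) auto
  have q1: "q < 1"
  proof -
    have "1 \<in> I" using m1 unfolding I_def by simp
    then have "q = (1 - p 1) * (\<Prod>l\<in>I - {1}. 1 - p l)" unfolding q_def using finI by (simp add: prod.remove)
    also have "\<dots> \<le> (1 - p 1) * 1"
      using p01 \<open>1 \<in> I\<close> unfolding I_def by (intro mult_left_mono prod_le_1) auto
    also have "\<dots> < 1" using pp \<open>1 \<in> I\<close> unfolding I_def by auto
    finally show ?thesis .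
  qed
  have qPP: "PP p I {} = q" unfolding PP_def q_def by simp
  define \<alpha> where "\<alpha> A = (if A = {} then 1 else c)" for A :: "nat set"
  define \<beta> where "\<beta> A = (1 - c) *\<^sub>R ((1 / real (card A)) *\<^sub>R (\<Sum>i\<in>A. u i))" for A :: "nat set"
  have gradeq: "\<And>i. i \<in> I \<Longrightarrow> grad i = (\<lambda>y. y - u i)"
    using grad grad_eq unfolding I_def by blast
  have lgd: "local_gd eta s grad i x = u i + c *\<^sub>R (x - u i)" if "i \<in> I" for i x
  proof -
    have "(\<lambda>y. y - eta *\<^sub>R grad i y) = (\<lambda>y. y - eta *\<^sub>R (y - u i))" using gradeq[OF that] by simp
    then show ?thesis unfolding local_gd_def c_def by (simp only: gd_iter)
  qed
  have sstep: "server_step eta s grad x A = \<alpha> A *\<^sub>R x + \<beta> A" if A: "A \<subseteq> I" for x A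
  proof (cases "A = {}")
    case True then show ?thesis unfolding server_step_def \<alpha>_def \<beta>_def by simp
  next
    case False
    have finA: "finite A" using A finI finite_subset by auto
    then have cA: "card A > 0" using False by (simp add: card_gt_0_iff)
    have "(\<Sum>i\<in>A. local_gd eta s grad i x) = (\<Sum>i\<in>A. c *\<^sub>R x + (1 - c) *\<^sub>R u i)"
      using lgd A by (intro sum.cong refl) (auto simp: algebra_simps)
    also have "\<dots> = real (card A) *\<^sub>R (c *\<^sub>R x) + (1 - c) *\<^sub>R (\<Sum>i\<in>A. u i)"
      by (simp add: sum.distrib scaleR_sum_right sum_constant_scaleR del: sum_constant)
    finally show ?thesis using False cA unfolding server_step_def \<alpha>_def \<beta>_def
      by (simp add: scaleR_add_right)
  qed
  define r where "r = (\<Sum>A\<in>Pow I. PP p I A * \<alpha> A)"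
  define B where "B = (\<Sum>A\<in>Pow I. PP p I A *\<^sub>R \<beta> A)"
  have sumPP: "(\<Sum>A\<in>Pow I. PP p I A) = 1" using sum_PP[of m p, OF p01] unfolding I_def by blast
  have r_eq: "r = c + q * (1 - c)"
  proof -
    have "r = (\<Sum>A\<in>Pow I. PP p I A * c + (if A = {} then PP p I A * (1 - c) else 0))"
      unfolding r_def \<alpha>_def by (intro sum.cong refl) (auto simp: algebra_simps)
    also have "\<dots> = c + q * (1 - c)"
      using finI sumPP qPP by (simp add: sum.distrib sum_distrib_right[symmetric])
    finally show ?thesis .
  qed
  have r1: "1 - r = (1 - c) * (1 - q)" unfolding r_eq by (simp add: algebra_simps)
  have rpos: "1 - r > 0" unfolding r1 using c1 q1 by simp
  have r0: "0 \<le> r" unfolding r_eq using c0 c1 q0 by simp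
  define \<mu> where "\<mu> t = fedavg_pmf m p eta s grad (0::real^'d) t" for t
  define E where "E t = measure_pmf.expectation (\<mu> t) (\<lambda>x. x)" for t
  have setA: "set_pmf (active_pmf m p) \<subseteq> Pow I" using set_active unfolding I_def by blast
  have finA: "finite (set_pmf (active_pmf m p))" using setA finI by (meson finite_Pow_iff finite_subset)
  have fin\<mu>: "finite (set_pmf (\<mu> t))" for t
    by (induction t) (auto simp: \<mu>_def finA)
  have Einner: "measure_pmf.expectation (map_pmf (server_step eta s grad x) (active_pmf m p)) (\<lambda>y. y) = r *\<^sub>R x + B" for x
  proof -
    have "measure_pmf.expectation (map_pmf (server_step eta s grad x) (active_pmf m p)) (\<lambda>y. y)
        = (\<Sum>A\<in>Pow I. PP p I A *\<^sub>R server_step eta s grad x A)"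
      unfolding integral_map_pmf I_def by (rule E_active) (use p01 in auto)
    also have "\<dots> = (\<Sum>A\<in>Pow I. PP p I A *\<^sub>R (\<alpha> A *\<^sub>R x + \<beta> A))"
      using sstep by (intro sum.cong refl) auto
    also have "\<dots> = r *\<^sub>R x + B" unfolding r_def B_def
      by (simp add: scaleR_add_right sum.distrib scaleR_sum_left)
    finally show ?thesis .
  qed
  have Estep: "E (Suc t) = r *\<^sub>R E t + B" for t
  proof -
    have "E (Suc t) = (\<Sum>a\<in>set_pmf (\<mu> t). pmf (\<mu> t) a *\<^sub>R (r *\<^sub>R a + B))"
      unfolding E_def \<mu>_def fedavg_pmf.simps
      by (subst pmf_expectation_bind[of "set_pmf (\<mu> t)"]) (auto simp: fin\<mu>[unfolded \<mu>_def] finA Einner[unfolded integral_map_pmf] \<mu>_def)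
    also have "\<dots> = r *\<^sub>R (\<Sum>a\<in>set_pmf (\<mu> t). pmf (\<mu> t) a *\<^sub>R a) + (\<Sum>a\<in>set_pmf (\<mu> t). pmf (\<mu> t) a) *\<^sub>R B"
      by (simp add: scaleR_add_right sum.distrib scaleR_sum_left scaleR_sum_right mult.commute)
    also have "(\<Sum>a\<in>set_pmf (\<mu> t). pmf (\<mu> t) a) = 1" using fin\<mu> by (intro sum_pmf_eq_1) auto
    also have "(\<Sum>a\<in>set_pmf (\<mu> t). pmf (\<mu> t) a *\<^sub>R a) = E t"
      unfolding E_def using fin\<mu> by (intro integral_measure_pmf[symmetric]) auto
    finally show ?thesis by simp
  qed
  define L where "L = (1 / (1 - r)) *\<^sub>R B"
  have Eclosed: "E t = (1 - r ^ t) *\<^sub>R L" for t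
  proof (induction t)
    case 0 then show ?case by (simp add: E_def \<mu>_def)
  next
    case (Suc t)
    have "B = (1 - r) *\<^sub>R L" unfolding L_def using rpos by simp
    then show ?case unfolding Estep Suc by (simp add: algebra_simps)
  qed
  have lim: "E \<longlonglongrightarrow> L"
  proof -
    have "norm r < 1" using r0 rpos by simp
    then have "(\<lambda>t. r ^ t) \<longlonglongrightarrow> 0" by (rule LIMSEQ_power_zero)
    then have "(\<lambda>t. (1 - r ^ t) *\<^sub>R L) \<longlonglongrightarrow> (1 - 0) *\<^sub>R L"
      using \<open>norm r < 1\<close> by (intro tendsto_intros) auto
    then show ?thesis unfolding Eclosed by simp
  qed
  define X where "X i = (\<Sum>A\<in>Pow I. PP p I A * (if i \<in> A then 1 / real (card A) else 0))" for i
  have Bswap: "B = (1 - c) *\<^sub>R (\<Sum>i\<in>I. X i *\<^sub>R u i)"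
  proof -
    have "(\<Sum>i\<in>I. X i *\<^sub>R u i) = (\<Sum>i\<in>I. \<Sum>A\<in>Pow I. (PP p I A * (if i \<in> A then 1 / real (card A) else 0)) *\<^sub>R u i)"
      unfolding X_def scaleR_sum_left ..
    also have "\<dots> = (\<Sum>A\<in>Pow I. \<Sum>i\<in>I. (PP p I A * (if i \<in> A then 1 / real (card A) else 0)) *\<^sub>R u i)"
      by (rule sum.swap)
    also have "\<dots> = (\<Sum>A\<in>Pow I. PP p I A *\<^sub>R ((1 / real (card A)) *\<^sub>R (\<Sum>i\<in>A. u i)))"
    proof (intro sum.cong refl)
      fix A assume A: "A \<in> Pow I"
      have "(\<Sum>i\<in>A. u i) = (\<Sum>i\<in>I \<inter> A. u i)" using A by (simp add: Int_absorb1)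
      also have "\<dots> = (\<Sum>i\<in>I. if i \<in> A then u i else 0)" using finI by (rule sum.inter_restrict)
      finally show "(\<Sum>i\<in>I. (PP p I A * (if i \<in> A then 1 / real (card A) else 0)) *\<^sub>R u i)
          = PP p I A *\<^sub>R ((1 / real (card A)) *\<^sub>R (\<Sum>i\<in>A. u i))"
        by (simp add: scaleR_sum_right if_distrib if_distribR cong: if_cong)
    qed
    finally show ?thesis unfolding B_def \<beta>_def
      by (simp add: scaleR_sum_right mult.commute)
  qed
  have Lform: "L = (\<Sum>i\<in>I. (X i / (1 - q)) *\<^sub>R u i)"
  proof -
    have "(1 - c) * (1 - q) > 0" using c1 q1 by simp
    then have nz: "1 + c * q - (c + q) \<noteq> 0" by (simp add: algebra_simps)
    show ?thesis
      unfolding L_def Bswap r1 scaleR_sum_right scaleR_scaleR using c1 q1 nz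
      by (intro sum.cong refl arg_cong2[where f="(*\<^sub>R)"]) (simp add: field_simps)
  qed
  have Xi: "X i = p i * (1 + (\<Sum>j\<in>{2..m}. (-1) ^ (j + 1) * (1 / real j) *
                (\<Sum>S\<in>{S. S \<subseteq> {1..m} - {i} \<and> card S = j - 1}. \<Prod>z\<in>S. p z)))" if i: "i \<in> I" for i
  proof -
    have fJ: "finite (I - {i})" using finI by simp
    have cJ: "card (I - {i}) + 1 = m" using i finI unfolding I_def by simp
    have "X i = p i * (\<Sum>S\<in>Pow (I - {i}). (-1) ^ card S * prod p S * ww 0 (card S))"
      unfolding X_def by (rule C1[OF finI i])
    also note C3[OF fJ cJ]
    finally show ?thesis unfolding I_def .
  qed
  have "L = (\<Sum>i\<in>{1..m}.
           ((p i * (1 + (\<Sum>j\<in>{2..m}. (-1) ^ (j + 1) * (1 / real j) *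
                (\<Sum>S\<in>{S. S \<subseteq> {1..m} - {i} \<and> card S = j - 1}. \<Prod>z\<in>S. p z))))
            / (1 - (\<Prod>l\<in>{1..m}. 1 - p l))) *\<^sub>R u i)"
    unfolding Lform q_def using Xi unfolding I_def by (intro sum.cong refl) auto
  then show ?thesis using lim unfolding E_def \<mu>_def by simp
qed

end
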